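(* Every search game (as defined in the context) admits a pure (Bayesian) Nash equilibrium.
   Context: A search game $G=(N,\Omega,\Pi,\mu,K,c,v)$ consists of: a finite set of players $N=\{1,\ldots,n\}$; a finite set $\Omega$ of locations; for each player $i$ a partition $\Pi_i$ of $\Omega$, with $\pi_i(\omega)$ the cell containing $\omega$; a common prior $\mu\in\Delta(\Omega)$ with $\mu(\pi_i)>0$ for every cell of every player; capacities $K_i\in\mathbb{N}$; costs $c_i:\{0,\ldots,K_i\}\to\mathbb{R}_{\ge0}$ with $c_i(0)=0$ and nondecreasing increments $c_i(k+1)-c_i(k)\ge c_i(k)-c_i(k-1)$; rewards $v_i^m(\omega)\ge0$ weakly decreasing in $m$; social values $v_{\mathfrak{s}}(\omega)\ge0$. A pure strategy $s_i$ assigns to each cell $\pi_i$ a subset $s_i(\pi_i)\subseteq\pi_i$ of size at most $K_i$. With $m_s(\omega)=\sum_{i}\mathbf{1}_{\omega\in s_i(\pi_i(\omega))}$, player $i$'s payoff is $u_i(s)=\sum_{\omega}\mu(\omega)\big[\mathbf{1}_{\omega\in s_i(\pi_i(\omega))}v_i^{m_s(\omega)}(\omega)-c_i(|s_i(\pi_i(\omega))|)\big]$. A pure Nash equilibrium is a pure profile $s$ with $u_i(s)\ge u_i(s_i',s_{-i})$ for all $i$ and all pure $s_i'$. *)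

theory Defs
  imports Complex_Main "HOL-Library.Disjoint_Sets"
begin

definition cell :: "('p \<Rightarrow> 'w set set) \<Rightarrow> 'p \<Rightarrow> 'w \<Rightarrow> 'w set" where
  "cell Part i w = (THE C. C \<in> Part i \<and> w \<in> C)"

definition pure_strategy ::
  "('p \<Rightarrow> 'w set set) \<Rightarrow> ('p \<Rightarrow> nat) \<Rightarrow> 'p \<Rightarrow> ('w set \<Rightarrow> 'w set) \<Rightarrow> bool" where
  "pure_strategy Part K i si \<longleftrightarrow> (\<forall>C\<in>Part i. si C \<subseteq> C \<and> card (si C) \<le> K i)"

definition searchers ::
  "('p::finite \<Rightarrow> 'w set set) \<Rightarrow> ('p \<Rightarrow> 'w set \<Rightarrow> 'w set) \<Rightarrow> 'w \<Rightarrow> nat" where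
  "searchers Part s w = card {i. w \<in> s i (cell Part i w)}"

definition payoff ::
  "('p::finite \<Rightarrow> 'w::finite set set) \<Rightarrow> ('w \<Rightarrow> real) \<Rightarrow> ('p \<Rightarrow> nat \<Rightarrow> real)
   \<Rightarrow> ('p \<Rightarrow> nat \<Rightarrow> 'w \<Rightarrow> real) \<Rightarrow> 'p \<Rightarrow> ('p \<Rightarrow> 'w set \<Rightarrow> 'w set) \<Rightarrow> real" where
  "payoff Part \<mu> c v i s =
     (\<Sum>w\<in>UNIV. \<mu> w * ((if w \<in> s i (cell Part i w) then v i (searchers Part s w) w else 0)
                         - c i (card (s i (cell Part i w)))))"

definition pure_nash ::
  "('p::finite \<Rightarrow> 'w::finite set set) \<Rightarrow> ('w \<Rightarrow> real) \<Rightarrow> ('p \<Rightarrow> nat) \<Rightarrow> ('p \<Rightarrow> nat \<Rightarrow> real)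
   \<Rightarrow> ('p \<Rightarrow> nat \<Rightarrow> 'w \<Rightarrow> real) \<Rightarrow> ('p \<Rightarrow> 'w set \<Rightarrow> 'w set) \<Rightarrow> bool" where
  "pure_nash Part \<mu> K c v s \<longleftrightarrow>
     (\<forall>i. pure_strategy Part K i (s i)) \<and>
     (\<forall>i si'. pure_strategy Part K i si' \<longrightarrow> payoff Part \<mu> c v i (s(i := si')) \<le> payoff Part \<mu> c v i s)"

end

theory Submission
  imports Defs
begin


definition stab :: "('w \<Rightarrow> real) \<Rightarrow> (nat \<Rightarrow> real) \<Rightarrow> nat \<Rightarrow> 'w set \<Rightarrow> 'w set \<Rightarrow> bool" where
  "stab \<phi> d \<kappa> C T \<longleftrightarrow> (\<exists>\<theta>. (\<forall>x\<in>T. \<theta> \<le> \<phi> x) \<and> (\<forall>y\<in>C-T. \<phi> y \<le> \<theta>) \<and>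
      (1 \<le> card T \<longrightarrow> d (card T) \<le> \<theta>) \<and> (card T < \<kappa> \<longrightarrow> \<theta> \<le> d (card T + 1)))"

lemma stab_mono:
  assumes "stab \<phi> d \<kappa> C T" "\<And>x. x \<in> T \<Longrightarrow> \<phi> x \<le> \<psi> x" "\<And>y. y \<in> C - T \<Longrightarrow> \<psi> y \<le> \<phi> y"
  shows "stab \<psi> d \<kappa> C T"
  using assms unfolding stab_def by (meson order_trans)

lemma d_mono:
  fixes d :: "nat \<Rightarrow> real"
  assumes "\<And>j. 1 \<le> j \<Longrightarrow> j + 1 \<le> \<kappa> \<Longrightarrow> d j \<le> d (j+1)"
  shows "1 \<le> a \<Longrightarrow> a \<le> b \<Longrightarrow> b \<le> \<kappa> \<Longrightarrow> d a \<le> d b"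
proof (induction b)
  case 0 then show ?case by simp
next
  case (Suc b)
  show ?case
  proof (cases "a = Suc b")
    case True then show ?thesis by simp
  next
    case False
    then have "a \<le> b" using Suc by simp
    then have "d a \<le> d b" using Suc by simp
    also have "d b \<le> d (b+1)" using assms[of b] Suc \<open>a \<le> b\<close> by simp
    finally show ?thesis by simp
  qed
qed

lemma D_min:
  fixes D :: "nat \<Rightarrow> real"
  assumes mono: "\<And>j. 1 \<le> j \<Longrightarrow> j + 1 \<le> \<kappa> \<Longrightarrow> D j - D (j - 1) \<le> D (j+1) - D j"
    and lo: "1 \<le> k \<Longrightarrow> D k - D (k - 1) \<le> \<theta>"
    and hi: "k < \<kappa> \<Longrightarrow> \<theta> \<le> D (k+1) - D k"
    and k: "k \<le> \<kappa>" and j: "j \<le> \<kappa>"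
  shows "D k - k * \<theta> \<le> D j - j * \<theta>"
proof -
  define d where "d j = D j - D (j - 1)" for j
  have dm: "\<And>a b. 1 \<le> a \<Longrightarrow> a \<le> b \<Longrightarrow> b \<le> \<kappa> \<Longrightarrow> d a \<le> d b"
  proof -
    fix a b assume "1 \<le> a" "a \<le> b" "b \<le> \<kappa>"
    moreover have "\<And>j. 1 \<le> j \<Longrightarrow> j + 1 \<le> \<kappa> \<Longrightarrow> d j \<le> d (j+1)"
      using mono by (simp add: d_def)
    ultimately show "d a \<le> d b" using d_mono[of \<kappa> d] by blast
  qed
  have up: "\<And>j. k \<le> j \<Longrightarrow> j \<le> \<kappa> \<Longrightarrow> D k - k * \<theta> \<le> D j - j * \<theta>"
  proof -
    fix j show "k \<le> j \<Longrightarrow> j \<le> \<kappa> \<Longrightarrow> D k - k * \<theta> \<le> D j - j * \<theta>"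
    proof (induction j)
      case 0 then show ?case by simp
    next
      case (Suc j)
      show ?case
      proof (cases "k = Suc j")
        case True then show ?thesis by simp
      next
        case False
        then have kj: "k \<le> j" using Suc by simp
        have "\<theta> \<le> d (k+1)" using hi Suc kj by (simp add: d_def)
        also have "d (k+1) \<le> d (Suc j)" using dm[of "k+1" "Suc j"] Suc kj by simp
        finally have "\<theta> \<le> D (Suc j) - D j" by (simp add: d_def)
        moreover have "D k - k * \<theta> \<le> D j - j * \<theta>" using Suc kj by simp
        ultimately show ?thesis by (simp add: algebra_simps)
      qed
    qed
  qed
  have down: "\<And>i. i \<le> k \<Longrightarrow> D k - k * \<theta> \<le> D (k - i) - (k - i) * \<theta>"
  proof -
    fix i show "i \<le> k \<Longrightarrow> D k - k * \<theta> \<le> D (k - i) - (k - i) * \<theta>"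
    proof (induction i)
      case 0 then show ?case by simp
    next
      case (Suc i)
      have "d (k - i) \<le> d k" using dm[of "k - i" k] Suc k by simp
      also have "d k \<le> \<theta>" using lo Suc by (simp add: d_def)
      finally have "D (k - i) - D (k - i - 1) \<le> \<theta>" by (simp add: d_def)
      moreover have "k - i - 1 = k - Suc i" by simp
      moreover have "real (k - i) = real (k - Suc i) + 1" using Suc by simp
      ultimately show ?case using Suc by (simp add: algebra_simps)
    qed
  qed
  show ?thesis
  proof (cases "k \<le> j")
    case True then show ?thesis using up j by simp
  next
    case False
    then show ?thesis using down[of "k - j"] by simp
  qed
qed

lemma stab_best:
  fixes \<phi> :: "'w \<Rightarrow> real" and D :: "nat \<Rightarrow> real"
  assumes st: "stab \<phi> (\<lambda>j. D j - D (j - 1)) \<kappa> C T"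
    and mono: "\<And>j. 1 \<le> j \<Longrightarrow> j + 1 \<le> \<kappa> \<Longrightarrow> D j - D (j - 1) \<le> D (j+1) - D j"
    and fin: "finite C" and T: "T \<subseteq> C" "card T \<le> \<kappa>" and T': "T' \<subseteq> C" "card T' \<le> \<kappa>"
  shows "(\<Sum>x\<in>T'. \<phi> x) - D (card T') \<le> (\<Sum>x\<in>T. \<phi> x) - D (card T)"
proof -
  obtain \<theta> where th: "\<forall>x\<in>T. \<theta> \<le> \<phi> x" "\<forall>y\<in>C-T. \<phi> y \<le> \<theta>"
    "1 \<le> card T \<longrightarrow> D (card T) - D (card T - 1) \<le> \<theta>" "card T < \<kappa> \<longrightarrow> \<theta> \<le> D (card T + 1) - D (card T)"
    using st unfolding stab_def by auto
  have fT: "finite T" "finite T'" using fin T T' finite_subset by auto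
  have "(\<Sum>x\<in>T'. \<phi> x - \<theta>) = (\<Sum>x\<in>T'\<inter>T. \<phi> x - \<theta>) + (\<Sum>x\<in>T'-T. \<phi> x - \<theta>)"
    using fT by (metis Diff_Diff_Int Int_commute sum.subset_diff inf_le2 Int_lower1 sum.Int_Diff)
  also have "(\<Sum>x\<in>T'-T. \<phi> x - \<theta>) \<le> 0"
    by (rule sum_nonpos) (use th T' in auto)
  also have "(\<Sum>x\<in>T'\<inter>T. \<phi> x - \<theta>) \<le> (\<Sum>x\<in>T. \<phi> x - \<theta>)"
    by (rule sum_mono2) (use fT th in auto)
  finally have s1: "(\<Sum>x\<in>T'. \<phi> x - \<theta>) \<le> (\<Sum>x\<in>T. \<phi> x - \<theta>)" by simp
  have s2: "D (card T) - card T * \<theta> \<le> D (card T') - card T' * \<theta>"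
    by (rule D_min[of \<kappa> D]) (use mono th T T' in auto)
  have e1: "(\<Sum>x\<in>T'. \<phi> x - \<theta>) = (\<Sum>x\<in>T'. \<phi> x) - card T' * \<theta>" by (simp add: sum_subtractf)
  have e2: "(\<Sum>x\<in>T. \<phi> x - \<theta>) = (\<Sum>x\<in>T. \<phi> x) - card T * \<theta>" by (simp add: sum_subtractf)
  show ?thesis using s1 s2 e1 e2 by linarith
qed

lemma ex_max:
  fixes \<phi> :: "'w \<Rightarrow> real"
  assumes "finite S" "S \<noteq> {}"
  shows "\<exists>w\<in>S. \<forall>y\<in>S. \<phi> y \<le> \<phi> w"
proof -
  have "Max (\<phi> ` S) \<in> \<phi> ` S" using assms by simp
  then obtain w where "w \<in> S" "\<phi> w = Max (\<phi> ` S)" by auto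
  then show ?thesis using assms by (metis Max_ge finite_imageI imageI)
qed

lemma stabI:
  assumes "\<And>x. x \<in> T \<Longrightarrow> \<theta> \<le> \<phi> x" "\<And>y. y \<in> C \<Longrightarrow> y \<notin> T \<Longrightarrow> \<phi> y \<le> \<theta>"
    "1 \<le> card T \<Longrightarrow> d (card T) \<le> \<theta>" "card T < \<kappa> \<Longrightarrow> \<theta> \<le> d (card T + 1)"
  shows "stab \<phi> d \<kappa> C T"
  unfolding stab_def using assms by blast

lemma stab_init:
  fixes \<phi> :: "'w \<Rightarrow> real" and d :: "nat \<Rightarrow> real"
  assumes st: "stab \<phi> d \<kappa> C T" and T: "T \<subseteq> C" "card T \<le> \<kappa>" and fin: "finite C"
    and mono: "\<And>j. 1 \<le> j \<Longrightarrow> j + 1 \<le> Suc \<kappa> \<Longrightarrow> d j \<le> d (j+1)"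
  shows "stab \<phi> d (Suc \<kappa>) C T \<or> (\<exists>w\<in>C-T. stab \<phi> d (Suc \<kappa>) C (insert w T))"
proof -
  obtain \<theta> where th: "\<forall>x\<in>T. \<theta> \<le> \<phi> x" "\<forall>y\<in>C-T. \<phi> y \<le> \<theta>"
    "1 \<le> card T \<longrightarrow> d (card T) \<le> \<theta>" "card T < \<kappa> \<longrightarrow> \<theta> \<le> d (card T + 1)"
    using st unfolding stab_def by auto
  show ?thesis
  proof (cases "card T < \<kappa>")
    case True
    then have "stab \<phi> d (Suc \<kappa>) C T" using th by (intro stabI[of T \<theta>]) auto
    then show ?thesis by simp
  next
    case False
    then have k: "card T = \<kappa>" using T by simp
    show ?thesis
    proof (cases "\<forall>y\<in>C-T. \<phi> y \<le> d (\<kappa> + 1)")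
      case True
      have "1 \<le> \<kappa> \<longrightarrow> d \<kappa> \<le> d (\<kappa> + 1)" using mono[of \<kappa>] by simp
      then have "stab \<phi> d (Suc \<kappa>) C T"
        using th True k by (intro stabI[of T "min \<theta> (d (\<kappa> + 1))"]) auto
      then show ?thesis by simp
    next
      case False
      then have ne: "C - T \<noteq> {}" by auto
      obtain w where w: "w \<in> C - T" "\<forall>y\<in>C-T. \<phi> y \<le> \<phi> w"
        using ex_max[of "C - T" \<phi>] ne fin by auto
      obtain y where y: "y \<in> C - T" "d (\<kappa> + 1) < \<phi> y" using False by auto
      have "\<phi> y \<le> \<phi> w" using y(1) w(2) by blast
      then have big: "d (\<kappa> + 1) < \<phi> w" using y by linarith
      have fT: "finite T" using T fin finite_subset by auto
      have ck: "card (insert w T) = \<kappa> + 1" using w fT k by simp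
      have a1: "\<phi> w \<le> \<phi> x" if "x \<in> insert w T" for x
      proof (cases "x = w")
        case False
        then have "x \<in> T" using that by simp
        then have "\<theta> \<le> \<phi> x" using th(1) by blast
        moreover have "\<phi> w \<le> \<theta>" using th(2) w(1) by blast
        ultimately show ?thesis by linarith
      qed simp
      have "stab \<phi> d (Suc \<kappa>) C (insert w T)"
      proof (rule stabI[of _ "\<phi> w"])
        show "\<And>x. x \<in> insert w T \<Longrightarrow> \<phi> w \<le> \<phi> x" by (rule a1)
        show "\<And>y. y \<in> C \<Longrightarrow> y \<notin> insert w T \<Longrightarrow> \<phi> y \<le> \<phi> w" using w by blast
        show "d (card (insert w T)) \<le> \<phi> w" using big ck by simp
        show "card (insert w T) < Suc \<kappa> \<Longrightarrow> \<phi> w \<le> d (card (insert w T) + 1)" using ck by simp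
      qed
      then show ?thesis using w by blast
    qed
  qed
qed

lemma stab_mover:
  fixes \<phi> \<psi> :: "'w \<Rightarrow> real" and d :: "nat \<Rightarrow> real"
  assumes st: "stab \<psi> d \<kappa> C T" and nst: "\<not> stab \<phi> d \<kappa> C T"
    and T: "T \<subseteq> C" "card T \<le> \<kappa>" "r \<in> T" and fin: "finite C"
    and eq: "\<And>x. x \<in> C \<Longrightarrow> x \<noteq> r \<Longrightarrow> \<psi> x = \<phi> x"
    and mono: "\<And>j. 1 \<le> j \<Longrightarrow> j + 1 \<le> \<kappa> \<Longrightarrow> d j \<le> d (j+1)"
  shows "(\<exists>y\<in>C-T. \<phi> r < \<phi> y \<and> stab \<phi> d \<kappa> C (insert y (T - {r}))) \<or> stab \<phi> d \<kappa> C (T - {r})"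
proof -
  obtain \<theta> where th: "\<forall>x\<in>T. \<theta> \<le> \<psi> x" "\<forall>y\<in>C-T. \<psi> y \<le> \<theta>"
    "1 \<le> card T \<longrightarrow> d (card T) \<le> \<theta>" "card T < \<kappa> \<longrightarrow> \<theta> \<le> d (card T + 1)"
    using st unfolding stab_def by auto
  have fT: "finite T" using T fin finite_subset by auto
  define k where "k = card T"
  have k1: "1 \<le> k" using T fT k_def by (metis One_nat_def Suc_leI card_gt_0_iff empty_iff)
  have kk: "k \<le> \<kappa>" using T k_def by simp
  have th1: "\<And>x. x \<in> T - {r} \<Longrightarrow> \<theta> \<le> \<phi> x"
  proof -
    fix x assume x: "x \<in> T - {r}"
    then have "\<psi> x = \<phi> x" using eq T by blast
    moreover have "\<theta> \<le> \<psi> x" using th(1) x by blast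
    ultimately show "\<theta> \<le> \<phi> x" by simp
  qed
  have th2: "\<And>x. x \<in> C - T \<Longrightarrow> \<phi> x \<le> \<theta>"
  proof -
    fix x assume x: "x \<in> C - T"
    then have "\<psi> x = \<phi> x" using eq T by blast
    moreover have "\<psi> x \<le> \<theta>" using th(2) x by blast
    ultimately show "\<phi> x \<le> \<theta>" by simp
  qed
  have th3: "d k \<le> \<theta>" using th(3) k1 k_def by simp
  have th4: "k < \<kappa> \<Longrightarrow> \<theta> \<le> d (k + 1)" using th(4) k_def by simp
  show ?thesis
  proof (cases "\<exists>y\<in>C-T. \<phi> r < \<phi> y \<and> d k \<le> \<phi> y")
    case True
    then obtain y where y: "y \<in> C - T" "\<phi> r < \<phi> y" "d k \<le> \<phi> y" by blast
    then have ne: "C - T \<noteq> {}" by auto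
    obtain w where w: "w \<in> C - T" "\<forall>y\<in>C-T. \<phi> y \<le> \<phi> w"
      using ex_max[of "C - T" \<phi>] ne fin by auto
    have "\<phi> y \<le> \<phi> w" using y(1) w(2) by blast
    then have wr: "\<phi> r < \<phi> w" "d k \<le> \<phi> w" using y by linarith+
    have ck: "card (insert w (T - {r})) = k" using w fT T k_def k1
      by (simp add: card_insert_if)
    have wth: "\<phi> w \<le> \<theta>" using th2 w by blast
    have "stab \<phi> d \<kappa> C (insert w (T - {r}))"
    proof (rule stabI[of _ "\<phi> w"])
      fix x assume "x \<in> insert w (T - {r})"
      then show "\<phi> w \<le> \<phi> x" using th1 wth by fastforce
    next
      fix x assume "x \<in> C" "x \<notin> insert w (T - {r})"
      then have "x = r \<or> x \<in> C - T" by blast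
      then show "\<phi> x \<le> \<phi> w" using wr w by fastforce
    next
      show "d (card (insert w (T - {r}))) \<le> \<phi> w" using ck wr by simp
    next
      assume "card (insert w (T - {r})) < \<kappa>"
      then show "\<phi> w \<le> d (card (insert w (T - {r})) + 1)" using ck th4 wth by simp
    qed
    then show ?thesis using w wr by blast
  next
    case nA: False
    show ?thesis
    proof (cases "\<phi> r < d k")
      case True
      have ck: "card (T - {r}) = k - 1" using T fT k_def by simp
      have dk: "1 \<le> k - 1 \<Longrightarrow> d (k - 1) \<le> d k" using mono[of "k - 1"] kk k1 by simp
      have "stab \<phi> d \<kappa> C (T - {r})"
      proof (rule stabI[of _ "d k"])
        fix x assume "x \<in> T - {r}"
        then show "d k \<le> \<phi> x" using th1 th3 by fastforce
      next
        fix x assume x: "x \<in> C" "x \<notin> T - {r}"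
        show "\<phi> x \<le> d k"
        proof (cases "x = r")
          case True then show ?thesis using \<open>\<phi> r < d k\<close> by simp
        next
          case False
          then have "x \<in> C - T" using x by blast
          then have "\<not> (\<phi> r < \<phi> x \<and> d k \<le> \<phi> x)" using nA by blast
          then show ?thesis using \<open>\<phi> r < d k\<close> by linarith
        qed
      next
        show "1 \<le> card (T - {r}) \<Longrightarrow> d (card (T - {r})) \<le> d k" using ck dk by simp
      next
        show "card (T - {r}) < \<kappa> \<Longrightarrow> d k \<le> d (card (T - {r}) + 1)" using ck k1 by simp
      qed
      then show ?thesis by simp
    next
      case False
      have "stab \<phi> d \<kappa> C T"
      proof (rule stabI[of _ "min \<theta> (\<phi> r)"])
        fix x assume "x \<in> T"
        then show "min \<theta> (\<phi> r) \<le> \<phi> x" using th1 by (cases "x = r") fastforce+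
      next
        fix x assume x: "x \<in> C" "x \<notin> T"
        then have "\<not> (\<phi> r < \<phi> x \<and> d k \<le> \<phi> x)" using nA by blast
        then have "\<phi> x \<le> \<phi> r" using False by linarith
        then show "\<phi> x \<le> min \<theta> (\<phi> r)" using th2 x by simp
      next
        show "1 \<le> card T \<Longrightarrow> d (card T) \<le> min \<theta> (\<phi> r)" using th3 False k_def by simp
      next
        show "card T < \<kappa> \<Longrightarrow> min \<theta> (\<phi> r) \<le> d (card T + 1)" using th4 k_def by simp
      qed
      then show ?thesis using nst by simp
    qed
  qed
qed




locale sg =
  fixes Part :: "'p::finite \<Rightarrow> 'w::finite set set" and \<mu> :: "'w \<Rightarrow> real" and K :: "'p \<Rightarrow> nat"
    and c :: "'p \<Rightarrow> nat \<Rightarrow> real" and v :: "'p \<Rightarrow> nat \<Rightarrow> 'w \<Rightarrow> real"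
  assumes part: "\<And>i. partition_on UNIV (Part i)"
    and mu_nonneg: "\<And>w. \<mu> w \<ge> 0"
    and c_convex: "\<And>i k. 1 \<le> k \<Longrightarrow> k + 1 \<le> K i \<Longrightarrow> c i (k + 1) - c i k \<ge> c i k - c i (k - 1)"
    and v_decr: "\<And>i m w. 1 \<le> m \<Longrightarrow> m + 1 \<le> card (UNIV :: 'p set) \<Longrightarrow> v i (m + 1) w \<le> v i m w"
begin

definition vc where "vc i m w = v i (min (card (UNIV::'p set)) (max 1 m)) w"
definition others where "others s i w = card {j. j \<noteq> i \<and> w \<in> s j (cell Part j w)}"
definition val where "val s i w = \<mu> w * vc i (others s i w + 1) w"
definition ind where "ind s i w = (if w \<in> s i (cell Part i w) then 1 else (0::nat))"
definition vB where "vB B s i w = \<mu> w * vc i (B w - ind s i w + 1) w"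
definition D where "D i C k = (\<Sum>w\<in>C. \<mu> w) * c i k"
definition dd where "dd i C j = D i C j - D i C (j - 1)"

lemma part_uniq: "A \<in> Part i \<Longrightarrow> B \<in> Part i \<Longrightarrow> w \<in> A \<Longrightarrow> w \<in> B \<Longrightarrow> A = B"
proof (rule ccontr)
  assume a: "A \<in> Part i" "B \<in> Part i" "w \<in> A" "w \<in> B" "A \<noteq> B"
  have dj: "disjoint (Part i)" using part[of i] by (simp add: partition_on_def)
  have "A \<inter> B = {}" by (rule disjointD[OF dj a(1) a(2) a(5)])
  then show False using a by blast
qed

lemma cell_prop: "cell Part i w \<in> Part i \<and> w \<in> cell Part i w"
proof -
  have u: "\<Union>(Part i) = UNIV" and dj: "disjoint (Part i)" using part[of i] by (auto simp: partition_on_def)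
  obtain C where C: "C \<in> Part i" "w \<in> C" using u by blast
  have "cell Part i w = C" unfolding cell_def
  proof (rule the_equality)
    show "C \<in> Part i \<and> w \<in> C" using C by simp
    fix C' assume h: "C' \<in> Part i \<and> w \<in> C'"
    show "C' = C" using part_uniq[OF _ C(1) _ C(2)] h by blast
  qed
  then show ?thesis using C by simp
qed

lemma cell_eq: "C \<in> Part i \<Longrightarrow> w \<in> C \<Longrightarrow> cell Part i w = C"
proof -
  assume C: "C \<in> Part i" "w \<in> C"
  have h: "cell Part i w \<in> Part i" "w \<in> cell Part i w" using cell_prop[of i w] by auto
  show ?thesis by (rule part_uniq[OF h(1) C(1) h(2) C(2)])
qed

lemma v_anti: "1 \<le> a \<Longrightarrow> a \<le> b \<Longrightarrow> b \<le> card (UNIV::'p set) \<Longrightarrow> v i b w \<le> v i a w"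
proof (induction b rule: nat_induct)
  case 0 then show ?case by simp
next
  case (Suc b)
  show ?case
  proof (cases "a = Suc b")
    case True then show ?thesis by simp
  next
    case False
    then have "a \<le> b" using Suc by simp
    then have "v i b w \<le> v i a w" using Suc by simp
    moreover have "v i (b + 1) w \<le> v i b w" using v_decr[of b] Suc \<open>a \<le> b\<close> by simp
    ultimately show ?thesis by simp
  qed
qed

lemma vc_anti: "m \<le> m' \<Longrightarrow> vc i m' w \<le> vc i m w"
proof -
  assume "m \<le> m'"
  have n1: "1 \<le> card (UNIV::'p set)" by (simp add: Suc_leI finite_UNIV_card_ge_0)
  show ?thesis unfolding vc_def
    by (rule v_anti) (use n1 \<open>m \<le> m'\<close> in auto)
qed

lemma dd_mono: "1 \<le> j \<Longrightarrow> j + 1 \<le> K i \<Longrightarrow> dd i C j \<le> dd i C (j+1)"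
proof -
  assume a: "1 \<le> j" "j + 1 \<le> K i"
  have m: "(\<Sum>w\<in>C. \<mu> w) \<ge> 0" by (simp add: mu_nonneg sum_nonneg)
  have "(\<Sum>w\<in>C. \<mu> w) * (c i j - c i (j - 1)) \<le> (\<Sum>w\<in>C. \<mu> w) * (c i (j+1) - c i j)"
    using c_convex[OF a] m by (intro mult_left_mono) auto
  then show ?thesis unfolding dd_def D_def by (simp add: algebra_simps)
qed

lemma card_split:
  fixes P :: "'p \<Rightarrow> bool"
  shows "card {j. P j} = card {j. j \<noteq> i \<and> P j} + (if P i then 1 else 0)"
proof (cases "P i")
  case True
  then have "{j. P j} = insert i {j. j \<noteq> i \<and> P j}" by auto
  then show ?thesis using True by simp
next
  case False
  then have "{j. P j} = {j. j \<noteq> i \<and> P j}" by auto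
  then show ?thesis using False by simp
qed

lemma searchers_split: "searchers Part s w = others s i w + ind s i w"
  unfolding searchers_def others_def ind_def by (rule card_split)

lemma others_le: "others s i w + 1 \<le> card (UNIV::'p set)"
proof -
  have "{j. j \<noteq> i \<and> w \<in> s j (cell Part j w)} \<subseteq> UNIV - {i}" by auto
  then have "others s i w \<le> card (UNIV - {i} :: 'p set)" unfolding others_def by (intro card_mono) auto
  moreover have "0 < card (UNIV::'p set)" by (simp add: finite_UNIV_card_ge_0)
  moreover have "card (UNIV - {i} :: 'p set) = card (UNIV::'p set) - 1" by (simp add: card_Diff_singleton)
  ultimately show ?thesis by linarith
qed

lemma val_alt: "val s i w = \<mu> w * vc i (searchers Part s w - ind s i w + 1) w"
  unfolding val_def using searchers_split[of s w i] by simp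

lemma val_le_vB: "B w \<le> searchers Part s w \<Longrightarrow> val s i w \<le> vB B s i w"
  unfolding val_alt vB_def by (intro mult_left_mono vc_anti) (auto simp: mu_nonneg)

lemma val_eq_vB: "B w = searchers Part s w \<Longrightarrow> val s i w = vB B s i w"
  unfolding val_alt vB_def by simp

lemma others_upd: "others (s(i := X)) i w = others s i w"
  unfolding others_def by (auto intro!: arg_cong[where f=card])

lemma val_upd: "val (s(i := X)) i = val s i"
  by (rule ext) (simp add: val_def others_upd)

lemma ind_upd:
  assumes "C \<in> Part i"
  shows "ind (s(i := (s i)(C := X))) j w = (if j = i \<and> w \<in> C then (if w \<in> X then 1 else 0) else ind s j w)"
  unfolding ind_def using cell_eq[OF assms] cell_prop[of i w] by auto

lemma searchers_upd:
  assumes "C \<in> Part i"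
  shows "searchers Part (s(i := (s i)(C := X))) w = others s i w + (if w \<in> C then (if w \<in> X then 1 else 0) else ind s i w)"
  using searchers_split[of "s(i := (s i)(C := X))" w i] ind_upd[OF assms, of s X i w]
  by (simp add: others_upd)

lemma vB_upd_other:
  assumes "C \<in> Part i" "C' \<in> Part j" "(j, C') \<noteq> (i, C)" "w \<in> C'"
  shows "vB B (s(i := (s i)(C := X))) j w = vB B s j w"
proof -
  have nc: "\<not> (j = i \<and> w \<in> C)"
  proof
    assume h: "j = i \<and> w \<in> C"
    then have "C' \<in> Part i" using assms(2) by simp
    then have "C = C'" using part_uniq[OF assms(1)] h assms(4) by blast
    then show False using assms(3) h by simp
  qed
  have "ind (s(i := (s i)(C := X))) j w = (if j = i \<and> w \<in> C then (if w \<in> X then 1 else 0) else ind s j w)"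
    by (rule ind_upd[OF assms(1)])
  also have "\<dots> = ind s j w" using nc by (rule if_not_P)
  finally have "ind (s(i := (s i)(C := X))) j w = ind s j w" .
  then show ?thesis unfolding vB_def by simp
qed

end



context sg begin

definition NEk where "NEk \<kappa> s \<longleftrightarrow> (\<forall>i. \<forall>C\<in>Part i. s i C \<subseteq> C \<and> card (s i C) \<le> \<kappa> i C \<and> stab (val s i) (dd i C) (\<kappa> i C) C (s i C))"
definition PhInv where "PhInv \<kappa> B s r \<longleftrightarrow> (\<forall>i. \<forall>C\<in>Part i. s i C \<subseteq> C \<and> card (s i C) \<le> \<kappa> i C \<and> stab (vB B s i) (dd i C) (\<kappa> i C) C (s i C))
   \<and> (\<forall>x. searchers Part s x = B x + (if x = r then 1 else 0))"
definition FF where "FF B i x = \<mu> x * vc i (B x + 1) x"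
definition Phi where "Phi B s = (\<Sum>i\<in>UNIV. \<Sum>x\<in>UNIV. if x \<in> s i (cell Part i x) then FF B i x else 0)"

lemma stab_cong: "(\<And>x. x \<in> C \<Longrightarrow> \<phi> x = \<psi> x) \<Longrightarrow> T \<subseteq> C \<Longrightarrow> stab \<phi> d \<kappa> C T \<Longrightarrow> stab \<psi> d \<kappa> C T"
  by (erule stab_mono) auto

lemma searchers_in:
  assumes "C \<in> Part i" "x \<in> C"
  shows "searchers Part (s(i := (s i)(C := X))) x + (if x \<in> s i C then 1 else 0) = searchers Part s x + (if x \<in> X then 1 else 0)"
proof -
  have "ind s i x = (if x \<in> s i C then 1 else 0)" unfolding ind_def using cell_eq[OF assms] by simp
  then show ?thesis using searchers_upd[OF assms(1), of s X x] searchers_split[of s x i] assms(2) by simp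
qed

lemma searchers_out:
  assumes "C \<in> Part i" "x \<notin> C"
  shows "searchers Part (s(i := (s i)(C := X))) x = searchers Part s x"
  using searchers_upd[OF assms(1), of s X x] searchers_split[of s x i] assms(2) by simp

lemma dd_mono_k: "\<kappa> \<le> K i \<Longrightarrow> (\<And>j. 1 \<le> j \<Longrightarrow> j + 1 \<le> \<kappa> \<Longrightarrow> dd i C j \<le> dd i C (j+1))"
  using dd_mono by simp

lemma Phi_swap:
  assumes C: "C \<in> Part i" and r: "r \<in> s i C" and y: "y \<in> C" "y \<notin> s i C" and sub: "s i C \<subseteq> C"
  shows "Phi B (s(i := (s i)(C := insert y (s i C - {r})))) = Phi B s + FF B i y - FF B i r"
proof -
  define t where "t = s(i := (s i)(C := insert y (s i C - {r})))"
  define g where "g u j x = (if x \<in> u j (cell Part j x) then FF B j x else 0)" for u j x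
  have ry: "r \<noteq> y" using r y by auto
  have rC: "r \<in> C" using r sub by blast
  have gi: "g t i x = g s i x + (if x = y then FF B i y else 0) - (if x = r then FF B i r else 0)" for x
  proof (cases "x \<in> C")
    case True
    then have "cell Part i x = C" by (rule cell_eq[OF C])
    then show ?thesis unfolding g_def t_def using ry y r by auto
  next
    case False
    then have "cell Part i x \<noteq> C" using cell_prop[of i x] by auto
    moreover have "x \<noteq> y" "x \<noteq> r" using False y rC by auto
    ultimately show ?thesis unfolding g_def t_def by simp
  qed
  have si: "(\<Sum>x\<in>UNIV. g t i x) = (\<Sum>x\<in>UNIV. g s i x) + FF B i y - FF B i r"
    unfolding gi by (simp add: sum.distrib sum_subtractf)
  have sj: "(\<Sum>x\<in>UNIV. g t j x) = (\<Sum>x\<in>UNIV. g s j x) + (if j = i then FF B i y - FF B i r else 0)" for j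
    using si unfolding t_def g_def by (cases "j = i") auto
  have "Phi B t = (\<Sum>j\<in>UNIV. \<Sum>x\<in>UNIV. g t j x)" unfolding Phi_def g_def by simp
  also have "\<dots> = (\<Sum>j\<in>UNIV. (\<Sum>x\<in>UNIV. g s j x) + (if j = i then FF B i y - FF B i r else 0))"
    by (simp add: sj)
  also have "\<dots> = Phi B s + FF B i y - FF B i r" unfolding Phi_def g_def by (simp add: sum.distrib)
  finally show ?thesis unfolding t_def .
qed


lemma phase:
  assumes kK: "\<And>i C. C \<in> Part i \<Longrightarrow> \<kappa> i C \<le> K i"
  shows "PhInv \<kappa> B s r \<Longrightarrow> \<exists>t. NEk \<kappa> t"
proof (induction "card {t. Phi B s < Phi B t}" arbitrary: s r rule: less_induct)
  case less
  have inv: "\<And>i C. C \<in> Part i \<Longrightarrow> s i C \<subseteq> C \<and> card (s i C) \<le> \<kappa> i C \<and> stab (vB B s i) (dd i C) (\<kappa> i C) C (s i C)"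
    using less.prems unfolding PhInv_def by blast
  have ld: "\<And>x. searchers Part s x = B x + (if x = r then 1 else 0)"
    using less.prems unfolding PhInv_def by blast
  show ?case
  proof (cases "NEk \<kappa> s")
    case True then show ?thesis by blast
  next
    case False
    then obtain i C where C: "C \<in> Part i" and
      nn: "\<not> (s i C \<subseteq> C \<and> card (s i C) \<le> \<kappa> i C \<and> stab (val s i) (dd i C) (\<kappa> i C) C (s i C))"
      unfolding NEk_def by blast
    have nst: "\<not> stab (val s i) (dd i C) (\<kappa> i C) C (s i C)" using nn inv[OF C] by simp
    define T where "T = s i C"
    have TC: "T \<subseteq> C" "card T \<le> \<kappa> i C" and stT: "stab (vB B s i) (dd i C) (\<kappa> i C) C T"
      using inv[OF C] T_def by auto
    have le: "\<And>x. val s i x \<le> vB B s i x" by (rule val_le_vB) (simp add: ld)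
    have eqx: "\<And>x. x \<noteq> r \<Longrightarrow> val s i x = vB B s i x" by (rule val_eq_vB) (simp add: ld)
    have rT: "r \<in> T"
    proof (rule ccontr)
      assume "r \<notin> T"
      have "stab (val s i) (dd i C) (\<kappa> i C) C T"
      proof (rule stab_mono[OF stT])
        fix x assume "x \<in> T"
        then have "x \<noteq> r" using \<open>r \<notin> T\<close> by blast
        then show "vB B s i x \<le> val s i x" using eqx[of x] by simp
      next
        fix x show "val s i x \<le> vB B s i x" by (rule le)
      qed
      then show False using nst T_def by simp
    qed
    have mono: "\<And>j. 1 \<le> j \<Longrightarrow> j + 1 \<le> \<kappa> i C \<Longrightarrow> dd i C j \<le> dd i C (j+1)"
      using dd_mono kK[OF C] by simp
    have "(\<exists>y\<in>C-T. val s i r < val s i y \<and> stab (val s i) (dd i C) (\<kappa> i C) C (insert y (T - {r})))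
        \<or> stab (val s i) (dd i C) (\<kappa> i C) C (T - {r})"
      by (rule stab_mover[OF stT _ TC rT finite_subset[OF subset_UNIV finite_UNIV], of "val s i"]) (use nst T_def eqx mono in auto)
    then show ?thesis
    proof
      assume "\<exists>y\<in>C-T. val s i r < val s i y \<and> stab (val s i) (dd i C) (\<kappa> i C) C (insert y (T - {r}))"
      then obtain y where y: "y \<in> C" "y \<notin> T" and vry: "val s i r < val s i y"
        and sty: "stab (val s i) (dd i C) (\<kappa> i C) C (insert y (T - {r}))" by blast
      define t where "t = s(i := (s i)(C := insert y (T - {r})))"
      have ry: "r \<noteq> y" using rT y by auto
      have ld': "searchers Part t x = B x + (if x = y then 1 else 0)" for x
      proof (cases "x \<in> C")
        case True
        have "searchers Part t x + (if x \<in> T then 1 else 0) = searchers Part s x + (if x \<in> insert y (T - {r}) then 1 else 0)"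
          unfolding t_def T_def by (rule searchers_in[OF C True])
        note e = this
        consider "x = y" | "x = r" | "x \<noteq> y" "x \<noteq> r" by blast
        then show ?thesis
        proof cases
          case 1 then show ?thesis using e ld[of x] ry y by simp
        next
          case 2 then show ?thesis using e ld[of x] ry rT by simp
        next
          case 3 then show ?thesis using e ld[of x] by simp
        qed
      next
        case False
        have "searchers Part t x = searchers Part s x" unfolding t_def by (rule searchers_out[OF C False])
        moreover have "x \<noteq> r" "x \<noteq> y" using False rT TC y by auto
        ultimately show ?thesis using ld[of x] by simp
      qed
      have valt: "val t i = val s i" unfolding t_def by (rule val_upd)
      have inv': "t j C' \<subseteq> C' \<and> card (t j C') \<le> \<kappa> j C' \<and> stab (vB B t j) (dd j C') (\<kappa> j C') C' (t j C')"
        if C': "C' \<in> Part j" for j C'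
      proof (cases "j = i \<and> C' = C")
        case True
        have tic: "t i C = insert y (T - {r})" unfolding t_def by simp
        have fT: "finite T" by (rule finite_subset[OF TC(1)]) simp
        have c0: "card T > 0" using fT rT card_gt_0_iff by blast
        have "card (insert y (T - {r})) = Suc (card (T - {r}))" using fT y by simp
        also have "card (T - {r}) = card T - 1" using fT rT by simp
        finally have cd: "card (insert y (T - {r})) = card T" using c0 by simp
        have "stab (vB B t i) (dd i C) (\<kappa> i C) C (insert y (T - {r}))"
        proof (rule stab_mono[OF sty])
          fix x show "val s i x \<le> vB B t i x" unfolding valt[symmetric] by (rule val_le_vB) (simp add: ld')
        next
          fix x assume "x \<in> C - insert y (T - {r})"
          then have "x \<noteq> y" by auto
          then have "val t i x = vB B t i x" by (intro val_eq_vB) (simp add: ld')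
          then show "vB B t i x \<le> val s i x" using valt by simp
        qed
        then show ?thesis using True tic cd TC rT y by auto
      next
        case False
        then have tj: "t j C' = s j C'" unfolding t_def by auto
        have this_stab: "stab (vB B s j) (dd j C') (\<kappa> j C') C' (s j C')" using inv[OF C'] by simp
        have ne: "(j, C') \<noteq> (i, C)" using False by auto
        from this_stab have "stab (vB B t j) (dd j C') (\<kappa> j C') C' (s j C')"
        proof (rule stab_cong[rotated 2])
          fix x assume x: "x \<in> C'"
          have "vB B t j x = vB B s j x" unfolding t_def by (rule vB_upd_other[OF C C' ne x])
          then show "vB B s j x = vB B t j x" by simp
        qed (use inv[OF C'] in auto)
        then show ?thesis using tj inv[OF C'] by simp
      qed
      have P': "PhInv \<kappa> B t y" unfolding PhInv_def using inv' ld' by blast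
      have vy: "val s i y = FF B i y"
      proof -
        have "ind s i y = 0" unfolding ind_def using cell_eq[OF C y(1)] y T_def by simp
        then have "others s i y = B y" using searchers_split[of s y i] ld[of y] ry by simp
        then show ?thesis unfolding val_def FF_def by simp
      qed
      have vr: "val s i r = FF B i r"
      proof -
        have rC: "r \<in> C" using rT TC by blast
        have "ind s i r = 1" unfolding ind_def using cell_eq[OF C rC] rT T_def by simp
        then have "others s i r = B r" using searchers_split[of s r i] ld[of r] by simp
        then show ?thesis unfolding val_def FF_def by simp
      qed
      have "Phi B t = Phi B s + FF B i y - FF B i r"
        unfolding t_def T_def by (rule Phi_swap[OF C]) (use rT y TC T_def in auto)
      then have Pgt: "Phi B s < Phi B t" using vry vy vr by simp
      have "{u. Phi B t < Phi B u} \<subset> {u. Phi B s < Phi B u}" using Pgt by auto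
      then have "card {u. Phi B t < Phi B u} < card {u. Phi B s < Phi B u}"
        by (rule psubset_card_mono[OF finite_subset[OF subset_UNIV finite_UNIV]])
      then show ?thesis by (rule less.hyps[OF _ P'])
    next
      assume std: "stab (val s i) (dd i C) (\<kappa> i C) C (T - {r})"
      define t where "t = s(i := (s i)(C := T - {r}))"
      have ld': "searchers Part t x = B x" for x
      proof (cases "x \<in> C")
        case True
        have "searchers Part t x + (if x \<in> T then 1 else 0) = searchers Part s x + (if x \<in> T - {r} then 1 else 0)"
          unfolding t_def T_def by (rule searchers_in[OF C True])
        note e = this
        consider "x = r" | "x \<noteq> r" by blast
        then show ?thesis
        proof cases
          case 1 then show ?thesis using e ld[of x] rT by simp
        next
          case 2 then show ?thesis using e ld[of x] by simp
        qed
      next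
        case False
        have "searchers Part t x = searchers Part s x" unfolding t_def by (rule searchers_out[OF C False])
        moreover have "x \<noteq> r" using False rT TC by auto
        ultimately show ?thesis using ld[of x] by simp
      qed
      have valt: "val t i = val s i" unfolding t_def by (rule val_upd)
      have "NEk \<kappa> t" unfolding NEk_def
      proof (intro allI ballI)
        fix j C' assume C': "C' \<in> Part j"
        show "t j C' \<subseteq> C' \<and> card (t j C') \<le> \<kappa> j C' \<and> stab (val t j) (dd j C') (\<kappa> j C') C' (t j C')"
        proof (cases "j = i \<and> C' = C")
          case True
          have tic: "t i C = T - {r}" unfolding t_def by simp
          have fT: "finite T" by (rule finite_subset[OF TC(1)]) simp
          have "card (T - {r}) \<le> card T" using fT by (simp add: card_Diff1_le)
          then show ?thesis using True tic TC std valt by auto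
        next
          case False
          then have tj: "t j C' = s j C'" unfolding t_def by auto
          have "stab (vB B s j) (dd j C') (\<kappa> j C') C' (s j C')" using inv[OF C'] by simp
          then have "stab (val t j) (dd j C') (\<kappa> j C') C' (s j C')"
          proof (rule stab_cong[rotated 2])
            fix x assume x: "x \<in> C'"
            have ne: "(j, C') \<noteq> (i, C)" using False by auto
            have "vB B t j x = vB B s j x" unfolding t_def by (rule vB_upd_other[OF C C' ne x])
            then have "vB B s j x = vB B t j x" by simp
            also have "\<dots> = val t j x" by (rule val_eq_vB[symmetric]) (simp add: ld')
            finally show "vB B s j x = val t j x" .
          qed (use inv[OF C'] in auto)
          then show ?thesis using tj inv[OF C'] by simp
        qed
      qed
      then show ?thesis by blast
    qed
  qed
qed


lemma start:
  assumes kK: "\<And>i C. C \<in> Part i \<Longrightarrow> \<kappa> i C \<le> K i" and NE: "NEk \<kappa> S"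
    and C0: "C0 \<in> Part i0" and lt: "\<kappa> i0 C0 < K i0"
  shows "\<exists>t. NEk (\<lambda>i C. if i = i0 \<and> C = C0 then Suc (\<kappa> i0 C0) else \<kappa> i C) t"
proof -
  define \<kappa>' where "\<kappa>' = (\<lambda>i C. if i = i0 \<and> C = C0 then Suc (\<kappa> i0 C0) else \<kappa> i C)"
  have kK': "\<And>i C. C \<in> Part i \<Longrightarrow> \<kappa>' i C \<le> K i" using kK lt unfolding \<kappa>'_def by auto
  define T where "T = S i0 C0"
  have nei: "\<And>i C. C \<in> Part i \<Longrightarrow> S i C \<subseteq> C \<and> card (S i C) \<le> \<kappa> i C \<and> stab (val S i) (dd i C) (\<kappa> i C) C (S i C)"
    using NE unfolding NEk_def by blast
  have TC: "T \<subseteq> C0" "card T \<le> \<kappa> i0 C0" and stT: "stab (val S i0) (dd i0 C0) (\<kappa> i0 C0) C0 T"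
    using nei[OF C0] T_def by auto
  have mono: "\<And>j. 1 \<le> j \<Longrightarrow> j + 1 \<le> Suc (\<kappa> i0 C0) \<Longrightarrow> dd i0 C0 j \<le> dd i0 C0 (j+1)"
    using dd_mono lt by simp
  have "stab (val S i0) (dd i0 C0) (Suc (\<kappa> i0 C0)) C0 T \<or> (\<exists>w\<in>C0-T. stab (val S i0) (dd i0 C0) (Suc (\<kappa> i0 C0)) C0 (insert w T))"
    by (rule stab_init[OF stT TC finite_subset[OF subset_UNIV finite_UNIV] mono])
  then show ?thesis
  proof
    assume st: "stab (val S i0) (dd i0 C0) (Suc (\<kappa> i0 C0)) C0 T"
    have "NEk \<kappa>' S" unfolding NEk_def
    proof (intro allI ballI)
      fix i C assume C: "C \<in> Part i"
      show "S i C \<subseteq> C \<and> card (S i C) \<le> \<kappa>' i C \<and> stab (val S i) (dd i C) (\<kappa>' i C) C (S i C)"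
      proof (cases "i = i0 \<and> C = C0")
        case True then show ?thesis using st TC T_def unfolding \<kappa>'_def by auto
      next
        case False then show ?thesis using nei[OF C] unfolding \<kappa>'_def by auto
      qed
    qed
    then show ?thesis unfolding \<kappa>'_def by blast
  next
    assume "\<exists>w\<in>C0-T. stab (val S i0) (dd i0 C0) (Suc (\<kappa> i0 C0)) C0 (insert w T)"
    then obtain w where w: "w \<in> C0" "w \<notin> T" and stw: "stab (val S i0) (dd i0 C0) (Suc (\<kappa> i0 C0)) C0 (insert w T)"
      by blast
    define B where "B = searchers Part S"
    define t where "t = S(i0 := (S i0)(C0 := insert w T))"
    have ld': "searchers Part t x = B x + (if x = w then 1 else 0)" for x
    proof (cases "x \<in> C0")
      case True
      have e: "searchers Part t x + (if x \<in> T then 1 else 0) = searchers Part S x + (if x \<in> insert w T then 1 else 0)"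
        unfolding t_def T_def by (rule searchers_in[OF C0 True])
      consider "x = w" | "x \<noteq> w" by blast
      then show ?thesis
      proof cases
        case 1 then show ?thesis using e w B_def by simp
      next
        case 2 then show ?thesis using e B_def by simp
      qed
    next
      case False
      have "searchers Part t x = searchers Part S x" unfolding t_def by (rule searchers_out[OF C0 False])
      moreover have "x \<noteq> w" using False w by auto
      ultimately show ?thesis using B_def by simp
    qed
    have valt: "val t i0 = val S i0" unfolding t_def by (rule val_upd)
    have inv': "t j C' \<subseteq> C' \<and> card (t j C') \<le> \<kappa>' j C' \<and> stab (vB B t j) (dd j C') (\<kappa>' j C') C' (t j C')"
      if C': "C' \<in> Part j" for j C'
    proof (cases "j = i0 \<and> C' = C0")
      case True
      have tic: "t i0 C0 = insert w T" unfolding t_def by simp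
      have fT: "finite T" by (rule finite_subset[OF TC(1)]) simp
      have cd: "card (insert w T) = Suc (card T)" using fT w by simp
      have "stab (vB B t i0) (dd i0 C0) (Suc (\<kappa> i0 C0)) C0 (insert w T)"
      proof (rule stab_mono[OF stw])
        fix x show "val S i0 x \<le> vB B t i0 x" unfolding valt[symmetric] by (rule val_le_vB) (simp add: ld')
      next
        fix x assume "x \<in> C0 - insert w T"
        then have "x \<noteq> w" by auto
        then have "val t i0 x = vB B t i0 x" by (intro val_eq_vB) (simp add: ld')
        then show "vB B t i0 x \<le> val S i0 x" using valt by simp
      qed
      then show ?thesis using True tic cd TC w unfolding \<kappa>'_def by auto
    next
      case False
      then have tj: "t j C' = S j C'" unfolding t_def by auto
      have ne: "(j, C') \<noteq> (i0, C0)" using False by auto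
      have k': "\<kappa>' j C' = \<kappa> j C'" using False unfolding \<kappa>'_def by auto
      have this_stab: "stab (val S j) (dd j C') (\<kappa> j C') C' (S j C')" using nei[OF C'] by simp
      from this_stab have "stab (vB B t j) (dd j C') (\<kappa> j C') C' (S j C')"
      proof (rule stab_cong[rotated 2])
        fix x assume x: "x \<in> C'"
        have "vB B t j x = vB B S j x" unfolding t_def by (rule vB_upd_other[OF C0 C' ne x])
        also have "\<dots> = val S j x" by (rule val_eq_vB[symmetric]) (simp add: B_def)
        finally show "val S j x = vB B t j x" by simp
      qed (use nei[OF C'] in auto)
      then show ?thesis using tj nei[OF C'] k' by simp
    qed
    have P': "PhInv \<kappa>' B t w" unfolding PhInv_def using inv' ld' by blast
    have "\<exists>t. NEk \<kappa>' t" by (rule phase[OF kK' P'])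
    then show ?thesis unfolding \<kappa>'_def by blast
  qed
qed

lemma NEk_zero: "NEk (\<lambda>i C. 0) (\<lambda>i C. {})"
  unfolding NEk_def
proof (intro allI ballI conjI)
  fix i C assume "C \<in> Part i"
  have "finite C" by (rule finite_subset[OF subset_UNIV finite_UNIV])
  show "stab (val (\<lambda>i C. {}) i) (dd i C) 0 C {}"
  proof (rule stabI[of _ "\<Sum>y\<in>C. \<bar>val (\<lambda>i C. {}) i y\<bar>"])
    fix y assume "y \<in> C"
    then have "\<bar>val (\<lambda>i C. {}) i y\<bar> \<le> (\<Sum>y\<in>C. \<bar>val (\<lambda>i C. {}) i y\<bar>)"
      using \<open>finite C\<close> by (intro member_le_sum) auto
    then show "val (\<lambda>i C. {}) i y \<le> (\<Sum>y\<in>C. \<bar>val (\<lambda>i C. {}) i y\<bar>)" by linarith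
  qed auto
qed auto

lemma all_agents:
  "\<And>A. finite A \<Longrightarrow> A \<subseteq> {(i, C). C \<in> Part i} \<Longrightarrow> \<exists>s. NEk (\<lambda>i C. if (i, C) \<in> A then K i else 0) s"
proof -
  fix A :: "('p \<times> 'w set) set"
  show "finite A \<Longrightarrow> A \<subseteq> {(i, C). C \<in> Part i} \<Longrightarrow> \<exists>s. NEk (\<lambda>i C. if (i, C) \<in> A then K i else 0) s"
  proof (induction A rule: finite_induct)
    case empty
    show ?case using NEk_zero by auto
  next
    case (insert a A)
    obtain i0 C0 where a: "a = (i0, C0)" by (cases a)
    have C0: "C0 \<in> Part i0" using insert a by auto
    define \<kappa>A where "\<kappa>A = (\<lambda>i C. if (i, C) \<in> A then K i else (0::nat))"
    have k: "k \<le> K i0 \<Longrightarrow> \<exists>s. NEk (\<lambda>i C. if i = i0 \<and> C = C0 then k else \<kappa>A i C) s" for k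
    proof (induction k)
      case 0
      have "(\<lambda>i C. if i = i0 \<and> C = C0 then 0 else \<kappa>A i C) = \<kappa>A"
        using insert(2) a unfolding \<kappa>A_def by (auto intro!: ext)
      then show ?case using insert unfolding \<kappa>A_def by auto
    next
      case (Suc k)
      define \<kappa> where "\<kappa> = (\<lambda>i C. if i = i0 \<and> C = C0 then k else \<kappa>A i C)"
      obtain S where S: "NEk \<kappa> S" using Suc unfolding \<kappa>_def by auto
      have kK: "\<And>i C. C \<in> Part i \<Longrightarrow> \<kappa> i C \<le> K i" using Suc unfolding \<kappa>_def \<kappa>A_def by auto
      have "\<exists>t. NEk (\<lambda>i C. if i = i0 \<and> C = C0 then Suc (\<kappa> i0 C0) else \<kappa> i C) t"
      proof (rule start[OF kK S C0])
        have "\<kappa> i0 C0 = k" unfolding \<kappa>_def by simp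
        moreover have "k < K i0" using Suc.prems by simp
        ultimately show "\<kappa> i0 C0 < K i0" by simp
      qed
      moreover have "(\<lambda>i C. if i = i0 \<and> C = C0 then Suc (\<kappa> i0 C0) else \<kappa> i C) = (\<lambda>i C. if i = i0 \<and> C = C0 then Suc k else \<kappa>A i C)"
        unfolding \<kappa>_def by (auto intro!: ext)
      ultimately show ?case by simp
    qed
    obtain s where "NEk (\<lambda>i C. if i = i0 \<and> C = C0 then K i0 else \<kappa>A i C) s" using k by blast
    moreover have "(\<lambda>i C. if i = i0 \<and> C = C0 then K i0 else \<kappa>A i C) = (\<lambda>i C. if (i, C) \<in> insert a A then K i else 0)"
      unfolding \<kappa>A_def a by (auto intro!: ext)
    ultimately show ?case by auto
  qed
qed

lemma NEk_full: "\<exists>s. NEk (\<lambda>i C. K i) s"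
proof -
  have "finite {(i, C). C \<in> Part i}" by (rule finite_subset[OF subset_UNIV finite_UNIV])
  then obtain s where s: "NEk (\<lambda>i C. if (i, C) \<in> {(i, C). C \<in> Part i} then K i else 0) s"
    using all_agents by blast
  have "NEk (\<lambda>i C. K i) s" using s unfolding NEk_def by auto
  then show ?thesis by blast
qed

end



context sg begin

lemma vc_eq: "1 \<le> m \<Longrightarrow> m \<le> card (UNIV::'p set) \<Longrightarrow> vc i m w = v i m w"
  unfolding vc_def by simp

lemma sum_part: "(\<Sum>w\<in>UNIV. f w) = (\<Sum>C\<in>Part i. \<Sum>w\<in>C. f w)"
proof -
  have u: "\<Union>(Part i) = UNIV" using part[of i] by (simp add: partition_on_def)
  have "(\<Sum>w\<in>\<Union>(Part i). f w) = (sum \<circ> sum) f (Part i)"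
  proof (rule sum.Union_disjoint)
    show "\<forall>A\<in>Part i. finite A" by simp
    show "\<forall>A\<in>Part i. \<forall>B\<in>Part i. A \<noteq> B \<longrightarrow> A \<inter> B = {}" using part_uniq[of _ i] by blast
  qed
  then show ?thesis using u by simp
qed

lemma payoff_dec:
  assumes sub: "\<And>C. C \<in> Part i \<Longrightarrow> t i C \<subseteq> C"
  shows "payoff Part \<mu> c v i t = (\<Sum>C\<in>Part i. (\<Sum>w\<in>t i C. val t i w) - D i C (card (t i C)))"
proof -
  define f where "f w = \<mu> w * ((if w \<in> t i (cell Part i w) then v i (searchers Part t w) w else 0) - c i (card (t i (cell Part i w))))" for w
  have "payoff Part \<mu> c v i t = (\<Sum>w\<in>UNIV. f w)" unfolding payoff_def f_def by simp
  also have "\<dots> = (\<Sum>C\<in>Part i. \<Sum>w\<in>C. f w)" by (rule sum_part)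
  also have "\<dots> = (\<Sum>C\<in>Part i. (\<Sum>w\<in>t i C. val t i w) - D i C (card (t i C)))"
  proof (rule sum.cong[OF refl])
    fix C assume C: "C \<in> Part i"
    have fw: "f w = (if w \<in> t i C then val t i w else 0) - \<mu> w * c i (card (t i C))" if w: "w \<in> C" for w
    proof -
      have ce: "cell Part i w = C" by (rule cell_eq[OF C w])
      show ?thesis
      proof (cases "w \<in> t i C")
        case True
        have "ind t i w = 1" unfolding ind_def ce using True by simp
        then have "searchers Part t w = others t i w + 1" using searchers_split[of t w i] by simp
        moreover have "vc i (others t i w + 1) w = v i (others t i w + 1) w"
          by (rule vc_eq) (use others_le in auto)
        ultimately show ?thesis unfolding f_def val_def ce using True by (simp add: algebra_simps)
      next
        case False
        then show ?thesis unfolding f_def ce by simp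
      qed
    qed
    have fC: "finite C" by simp
    have "(\<Sum>w\<in>C. f w) = (\<Sum>w\<in>C. (if w \<in> t i C then val t i w else 0)) - (\<Sum>w\<in>C. \<mu> w * c i (card (t i C)))"
      using fw by (simp add: sum_subtractf)
    also have "(\<Sum>w\<in>C. (if w \<in> t i C then val t i w else 0)) = (\<Sum>w\<in>C \<inter> t i C. val t i w)"
      by (simp add: sum.inter_restrict[OF fC])
    also have "C \<inter> t i C = t i C" using sub[OF C] by blast
    also have "(\<Sum>w\<in>C. \<mu> w * c i (card (t i C))) = D i C (card (t i C))"
      unfolding D_def by (simp add: sum_distrib_right)
    finally show "(\<Sum>w\<in>C. f w) = (\<Sum>w\<in>t i C. val t i w) - D i C (card (t i C))" .
  qed
  finally show ?thesis .
qed

lemma NEk_nash: assumes "NEk (\<lambda>i C. K i) s" shows "pure_nash Part \<mu> K c v s"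
proof -
  have ne: "\<And>i C. C \<in> Part i \<Longrightarrow> s i C \<subseteq> C \<and> card (s i C) \<le> K i \<and> stab (val s i) (dd i C) (K i) C (s i C)"
    using assms unfolding NEk_def by blast
  have ps: "pure_strategy Part K i (s i)" for i unfolding pure_strategy_def using ne by blast
  have dev: "payoff Part \<mu> c v i (s(i := si')) \<le> payoff Part \<mu> c v i s" if si': "pure_strategy Part K i si'" for i si'
  proof -
    have sub': "\<And>C. C \<in> Part i \<Longrightarrow> (s(i := si')) i C \<subseteq> C" using si' unfolding pure_strategy_def by simp
    have sub: "\<And>C. C \<in> Part i \<Longrightarrow> s i C \<subseteq> C" using ne by blast
    have "payoff Part \<mu> c v i (s(i := si')) = (\<Sum>C\<in>Part i. (\<Sum>w\<in>(s(i := si')) i C. val (s(i := si')) i w) - D i C (card ((s(i := si')) i C)))"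
      by (rule payoff_dec) (rule sub')
    also have "\<dots> = (\<Sum>C\<in>Part i. (\<Sum>w\<in>si' C. val (s(i := si')) i w) - D i C (card (si' C)))"
      by simp
    also have "\<dots> = (\<Sum>C\<in>Part i. (\<Sum>w\<in>si' C. val s i w) - D i C (card (si' C)))"
      by (simp add: val_upd)
    also have "\<dots> \<le> (\<Sum>C\<in>Part i. (\<Sum>w\<in>s i C. val s i w) - D i C (card (s i C)))"
    proof (rule sum_mono)
      fix C assume C: "C \<in> Part i"
      have dde: "dd i C = (\<lambda>j. D i C j - D i C (j - 1))" by (rule ext) (simp add: dd_def)
      have st: "stab (val s i) (\<lambda>j. D i C j - D i C (j - 1)) (K i) C (s i C)" using ne[OF C] dde by simp
      have mono: "\<And>j. 1 \<le> j \<Longrightarrow> j + 1 \<le> K i \<Longrightarrow> D i C j - D i C (j - 1) \<le> D i C (j+1) - D i C j"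
        using dd_mono unfolding dd_def by fastforce
      show "(\<Sum>w\<in>si' C. val s i w) - D i C (card (si' C)) \<le> (\<Sum>w\<in>s i C. val s i w) - D i C (card (s i C))"
        by (rule stab_best[OF st mono]) (use ne[OF C] si' C in \<open>auto simp: pure_strategy_def\<close>)
    qed
    also have "\<dots> = payoff Part \<mu> c v i s" by (rule payoff_dec[symmetric]) (rule sub)
    finally show ?thesis .
  qed
  show ?thesis unfolding pure_nash_def using ps dev by blast
qed

end

theorem corollary1:
  fixes Part :: "'p::finite \<Rightarrow> 'w::finite set set"
    and \<mu> :: "'w \<Rightarrow> real"
    and K :: "'p \<Rightarrow> nat"
    and c :: "'p \<Rightarrow> nat \<Rightarrow> real"
    and v :: "'p \<Rightarrow> nat \<Rightarrow> 'w \<Rightarrow> real"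
    and vs :: "'w \<Rightarrow> real"
  assumes part: "\<And>i. partition_on UNIV (Part i)"
    and mu_nonneg: "\<And>w. \<mu> w \<ge> 0"
    and mu_sum: "(\<Sum>w\<in>UNIV. \<mu> w) = 1"
    and mu_cell: "\<And>i C. C \<in> Part i \<Longrightarrow> (\<Sum>w\<in>C. \<mu> w) > 0"
    and c0: "\<And>i. c i 0 = 0"
    and c_nonneg: "\<And>i k. k \<le> K i \<Longrightarrow> c i k \<ge> 0"
    and c_convex: "\<And>i k. 1 \<le> k \<Longrightarrow> k + 1 \<le> K i \<Longrightarrow>
                      c i (k + 1) - c i k \<ge> c i k - c i (k - 1)"
    and v_nonneg: "\<And>i m w. 1 \<le> m \<Longrightarrow> m \<le> card (UNIV :: 'p set) \<Longrightarrow> v i m w \<ge> 0"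
    and v_decr: "\<And>i m w. 1 \<le> m \<Longrightarrow> m + 1 \<le> card (UNIV :: 'p set) \<Longrightarrow> v i (m + 1) w \<le> v i m w"
    and vs_nonneg: "\<And>w. vs w \<ge> 0"
  shows "\<exists>s. pure_nash Part \<mu> K c v s"
proof -
  interpret sg Part \<mu> K c v
    by unfold_locales (use part mu_nonneg c_convex v_decr in auto)
  obtain s where "NEk (\<lambda>i C. K i) s" using NEk_full by blast
  then show ?thesis using NEk_nash by blast
qed


end
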